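(* Let $\mathfrak{n}$ be the real $7$-dimensional Lie algebra with basis $e_1,\dots,e_7$ whose nonzero brackets (up to antisymmetry) are $[e_1,e_2]=e_4$, $[e_1,e_4]=e_5$, $[e_1,e_5]=e_7$, $[e_2,e_3]=e_6+e_7$, $[e_2,e_4]=e_6$. Then $\mathfrak{n}$ is an Einstein nilradical.
   Context: A real nilpotent Lie algebra $\mathfrak{n}$ is called an Einstein nilradical if it admits an inner product such that the left-invariant Riemannian metric it defines on the simply connected nilpotent Lie group with Lie algebra $\mathfrak{n}$ is a nilsoliton, i.e. its Ricci operator satisfies $\mathrm{Ric}=c\,\mathrm{Id}+D$ for some $c\in\mathbb{R}$ and some derivation $D$ of $\mathfrak{n}$. Brackets of basis elements not listed are zero. *)

theory Defs
  imports Main Complex_Main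
begin

(* Conventions: an n-dimensional real Lie algebra is given by structure constants
   sc i j k (indices in {1..n}) w.r.t. a basis e_1..e_n, i.e. [e_i,e_j] = sum_k sc i j k e_k.
   Vectors are coordinate functions nat => real (only coordinates 1..n matter). *)

definition lie_bracket :: "nat \<Rightarrow> (nat \<Rightarrow> nat \<Rightarrow> nat \<Rightarrow> real) \<Rightarrow> (nat \<Rightarrow> real) \<Rightarrow> (nat \<Rightarrow> real) \<Rightarrow> (nat \<Rightarrow> real)" where
  "lie_bracket n sc x y = (\<lambda>k. \<Sum>i\<in>{1..n}. \<Sum>j\<in>{1..n}. x i * y j * sc i j k)"

definition lin_indep_family :: "nat \<Rightarrow> (nat \<Rightarrow> nat \<Rightarrow> real) \<Rightarrow> bool" where
  "lin_indep_family n u \<longleftrightarrow>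
     (\<forall>a. (\<forall>k\<in>{1..n}. (\<Sum>i\<in>{1..n}. a i * u i k) = 0) \<longrightarrow> (\<forall>i\<in>{1..n}. a i = 0))"

(* Metric Lie algebra described in an orthonormal basis u_1..u_n with structure
   constants C: [u_a,u_b] = sum_c C a b c u_c.
   Levi-Civita connection (Koszul formula for left-invariant fields):
   <nabla_{u_i} u_j, u_k> = 1/2 (<[u_i,u_j],u_k> - <[u_j,u_k],u_i> + <[u_k,u_i],u_j>) *)
definition lc_coef :: "(nat \<Rightarrow> nat \<Rightarrow> nat \<Rightarrow> real) \<Rightarrow> nat \<Rightarrow> nat \<Rightarrow> nat \<Rightarrow> real" where
  "lc_coef C i j k = (C i j k - C j k i + C k i j) / 2"

(* Curvature R(X,Y) = nabla_X nabla_Y - nabla_Y nabla_X - nabla_[X,Y];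
   R(u_i,u_j) u_l = sum_m curv_coef n C i j l m u_m *)
definition curv_coef :: "nat \<Rightarrow> (nat \<Rightarrow> nat \<Rightarrow> nat \<Rightarrow> real) \<Rightarrow> nat \<Rightarrow> nat \<Rightarrow> nat \<Rightarrow> nat \<Rightarrow> real" where
  "curv_coef n C i j l m =
     (\<Sum>k\<in>{1..n}. lc_coef C j l k * lc_coef C i k m - lc_coef C i l k * lc_coef C j k m)
     - (\<Sum>k\<in>{1..n}. C i j k * lc_coef C k l m)"

(* Ricci tensor ric(X,Y) = tr (Z \<mapsto> R(Z,X)Y), evaluated on u_a, u_b.
   In the orthonormal basis this is also the matrix of the Ricci operator Ric:
   Ric u_a = sum_b ric_coef n C a b u_b. *)
definition ric_coef :: "nat \<Rightarrow> (nat \<Rightarrow> nat \<Rightarrow> nat \<Rightarrow> real) \<Rightarrow> nat \<Rightarrow> nat \<Rightarrow> real" where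
  "ric_coef n C a b = (\<Sum>i\<in>{1..n}. curv_coef n C i a b i)"

(* D u_a = sum_b D a b u_b is a derivation: D[u_a,u_b] = [D u_a,u_b] + [u_a, D u_b] *)
definition is_derivation :: "nat \<Rightarrow> (nat \<Rightarrow> nat \<Rightarrow> nat \<Rightarrow> real) \<Rightarrow> (nat \<Rightarrow> nat \<Rightarrow> real) \<Rightarrow> bool" where
  "is_derivation n C D \<longleftrightarrow>
     (\<forall>a\<in>{1..n}. \<forall>b\<in>{1..n}. \<forall>d\<in>{1..n}.
        (\<Sum>c\<in>{1..n}. C a b c * D c d)
        = (\<Sum>e\<in>{1..n}. D a e * C e b d) + (\<Sum>e\<in>{1..n}. D b e * C a e d))"

definition is_nilsoliton_onb :: "nat \<Rightarrow> (nat \<Rightarrow> nat \<Rightarrow> nat \<Rightarrow> real) \<Rightarrow> bool" where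
  "is_nilsoliton_onb n C \<longleftrightarrow>
     (\<exists>c D. is_derivation n C D \<and>
        (\<forall>a\<in>{1..n}. \<forall>b\<in>{1..n}. ric_coef n C a b = c * (if a = b then 1 else 0) + D a b))"

(* Einstein nilradical: there is an inner product, i.e. a basis u_1..u_n declared
   orthonormal, for which the metric is a nilsoliton. *)
definition einstein_nilradical :: "nat \<Rightarrow> (nat \<Rightarrow> nat \<Rightarrow> nat \<Rightarrow> real) \<Rightarrow> bool" where
  "einstein_nilradical n sc \<longleftrightarrow>
     (\<exists>u C. lin_indep_family n u \<and>
        (\<forall>a\<in>{1..n}. \<forall>b\<in>{1..n}. \<forall>k\<in>{1..n}.
            lie_bracket n sc (u a) (u b) k = (\<Sum>c\<in>{1..n}. C a b c * u c k)) \<and>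
        is_nilsoliton_onb n C)"

definition n7_pos :: "(nat \<times> nat \<times> nat) set" where
  "n7_pos = {(1,2,4), (1,4,5), (1,5,7), (2,3,6), (2,3,7), (2,4,6)}"

definition n7_sc :: "nat \<Rightarrow> nat \<Rightarrow> nat \<Rightarrow> real" where
  "n7_sc i j k = (if (i,j,k) \<in> n7_pos then 1 else if (j,i,k) \<in> n7_pos then -1 else 0)"

end

theory Submission
  imports Defs
begin
definition Cp :: "nat \<Rightarrow> nat \<Rightarrow> nat \<Rightarrow> real" where
  "Cp i j k = (if (i,j,k) = (1,2,4) then (5 * sqrt 2 * sqrt 3) else if (i,j,k) = (1,3,5) then (- (6 * sqrt 2)) else if (i,j,k) = (1,4,5) then (3 * sqrt 2 * sqrt 11) else if (i,j,k) = (1,5,7) then (4 * sqrt 3 * sqrt 5) else if (i,j,k) = (2,3,6) then (3 * sqrt 13) else if (i,j,k) = (2,3,7) then (1 * sqrt 11) else if (i,j,k) = (2,4,6) then (1 * sqrt 11 * sqrt 13) else if (i,j,k) = (2,4,7) then (- (3)) else 0)"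

definition Cw :: "nat \<Rightarrow> nat \<Rightarrow> nat \<Rightarrow> real" where
  "Cw i j k = Cp i j k - Cp j i k"

definition uw :: "nat \<Rightarrow> nat \<Rightarrow> real" where
  "uw a k = (if (a,k) = (1,1) then (1) else if (a,k) = (2,2) then ((1 * sqrt 2 * sqrt 3 * sqrt 5 * sqrt 11) / 990) else if (a,k) = (3,3) then ((1 * sqrt 5) / 990) else if (a,k) = (3,4) then (- ((1 * sqrt 5) / 2475)) else if (a,k) = (4,4) then ((1 * sqrt 5 * sqrt 11) / 4950) else if (a,k) = (5,5) then ((1 * sqrt 2 * sqrt 5) / 29700) else if (a,k) = (6,6) then ((1 * sqrt 2 * sqrt 3 * sqrt 11 * sqrt 13) / 12741300) else if (a,k) = (6,7) then ((1 * sqrt 2 * sqrt 3 * sqrt 11 * sqrt 13) / 16988400) else if (a,k) = (7,7) then ((1 * sqrt 2 * sqrt 3) / 356400) else 0)"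

definition wt :: "nat \<Rightarrow> real" where
  "wt a = (if a = 1 then 1 else if a = 2 then 2 else if a = 3 \<or> a = 4 then 3 else if a = 5 then 4 else 5)"

definition Dw :: "nat \<Rightarrow> nat \<Rightarrow> real" where
  "Dw a b = (if a = b then 115 * wt a else 0)"

lemma set7: "{1..7::nat} = {1,2,3,4,5,6,7}" by auto

lemma sq_rules: "sqrt 2 * (sqrt 2 * x) = 2 * x" "sqrt 3 * (sqrt 3 * x) = 3 * x" "sqrt 5 * (sqrt 5 * x) = 5 * x"
  "sqrt 11 * (sqrt 11 * x) = 11 * x" "sqrt 13 * (sqrt 13 * x) = 13 * x"
  by (simp_all add: mult.assoc[symmetric])

lemma ric_ok: "\<forall>a\<in>{1..7}. \<forall>b\<in>{1..7}. ric_coef 7 Cw a b = (-445) * (if a = b then 1 else 0) + Dw a b"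
  unfolding ric_coef_def curv_coef_def lc_coef_def set7 Cw_def Cp_def Dw_def wt_def
  by (simp add: algebra_simps sq_rules)

lemma der_ok: "is_derivation 7 Cw Dw"
  unfolding is_derivation_def set7 Cw_def Cp_def Dw_def wt_def
  by (simp add: algebra_simps sq_rules)

lemma br_ok: "\<forall>a\<in>{1..7}. \<forall>b\<in>{1..7}. \<forall>k\<in>{1..7}.
            lie_bracket 7 n7_sc (uw a) (uw b) k = (\<Sum>c\<in>{1..7}. Cw a b c * uw c k)"
  unfolding lie_bracket_def set7 Cw_def Cp_def uw_def n7_sc_def n7_pos_def
  by (simp add: algebra_simps sq_rules)

lemma li_ok: "lin_indep_family 7 uw"
  unfolding lin_indep_family_def
proof (intro allI impI)
  fix a :: "nat \<Rightarrow> real"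
  assume H: "\<forall>k\<in>{1..7}. (\<Sum>i\<in>{1..7}. a i * uw i k) = 0"
  have h: "\<And>k. k \<in> {1,2,3,4,5,6,7} \<Longrightarrow> (\<Sum>i\<in>{1,2,3,4,5,6,7}. a i * uw i k) = 0"
    using H unfolding set7 by blast
  have e1: "a 1 = 0" using h[of 1] by (simp add: uw_def)
  have e2: "a 2 = 0" using h[of 2] by (simp add: uw_def)
  have e3: "a 3 = 0" using h[of 3] by (simp add: uw_def)
  have e4: "a 4 = 0" using h[of 4] e3 by (simp add: uw_def)
  have e5: "a 5 = 0" using h[of 5] by (simp add: uw_def)
  have e6: "a 6 = 0" using h[of 6] by (simp add: uw_def)
  have e7: "a 7 = 0" using h[of 7] e6 by (simp add: uw_def)
  show "\<forall>i\<in>{1..7}. a i = 0" unfolding set7 using e1 e2 e3 e4 e5 e6 e7 by simp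
qed

theorem mainTheorem14:
  shows "einstein_nilradical 7 n7_sc"
  unfolding einstein_nilradical_def is_nilsoliton_onb_def
  using li_ok br_ok der_ok ric_ok by blast
end
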